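(* In the standing setting below, let $X_i=(x_i,u_i)\in\mathbb{X}\times\mathbb{R}$ for $i=0,1$, and set $u_i'=F_{X_0X_1}(x_i)$ and $X_i'=(x_i,u_i')$ for $i=0,1$. Then $F_{X_0X_1}=F_{X_0'X_1'}$ on $\mathbb{X}$.
   Context: Standing setting: $\mathbb{X},\mathbb{Y}\subset\mathbb{R}^n$ are compact with non-empty interior; $c:\mathbb{X}\times\mathbb{Y}\to\mathbb{R}$ has continuous $D_xc$, $D_yc$, and continuous mixed second derivatives with $D^2_{xy}c=(D^2_{yx}c)^T$; for each $x$ the map $y\mapsto -D_xc(x,y)$ is injective on $\mathbb{Y}$ and for each $y$ the map $x\mapsto -D_yc(x,y)$ is injective on $\mathbb{X}$; $D^2_{xy}c(x,y)$ is invertible everywhere; for every $y$ the set $\{-D_yc(x,y):x\in\mathbb{X}\}$ is convex and for every $x$ the set $\{-D_xc(x,y):y\in\mathbb{Y}\}$ is convex. $c$-chord: for $X_i=(x_i,u_i)\in\mathbb{X}\times\mathbb{R}$, $F_{X_0X_1}(x)=\sup\{-c(x,y)+h: y\in\mathbb{Y},h\in\mathbb{R},-c(x_i,y)+h\le u_i, i=0,1\}$. *)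

theory Defs
  imports "HOL-Analysis.Analysis"
begin

text \<open>Points of R^n are elements of a Euclidean space 'a.
  Dxc x y and Dyc x y are the gradients of c in x and in y; Dxyc x y is the
  derivative of y |-> Dxc x y (the matrix D^2_xy c), Dyxc x y the derivative of
  x |-> Dyc x y (the matrix D^2_yx c).\<close>

definition standing_setting ::
  "'a::euclidean_space set \<Rightarrow> 'a set \<Rightarrow> ('a \<Rightarrow> 'a \<Rightarrow> real)
   \<Rightarrow> ('a \<Rightarrow> 'a \<Rightarrow> 'a) \<Rightarrow> ('a \<Rightarrow> 'a \<Rightarrow> 'a)
   \<Rightarrow> ('a \<Rightarrow> 'a \<Rightarrow> 'a \<Rightarrow>\<^sub>L 'a) \<Rightarrow> ('a \<Rightarrow> 'a \<Rightarrow> 'a \<Rightarrow>\<^sub>L 'a) \<Rightarrow> bool" where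
  "standing_setting X Y c Dxc Dyc Dxyc Dyxc \<longleftrightarrow>
     compact X \<and> compact Y \<and> interior X \<noteq> {} \<and> interior Y \<noteq> {} \<and>
     (\<forall>x\<in>X. \<forall>y\<in>Y. ((\<lambda>x'. c x' y) has_derivative (\<lambda>v. Dxc x y \<bullet> v)) (at x within X)) \<and>
     (\<forall>x\<in>X. \<forall>y\<in>Y. ((\<lambda>y'. c x y') has_derivative (\<lambda>v. Dyc x y \<bullet> v)) (at y within Y)) \<and>
     continuous_on (X \<times> Y) (\<lambda>(x, y). Dxc x y) \<and>
     continuous_on (X \<times> Y) (\<lambda>(x, y). Dyc x y) \<and>
     (\<forall>x\<in>X. \<forall>y\<in>Y. ((\<lambda>y'. Dxc x y') has_derivative blinfun_apply (Dxyc x y)) (at y within Y)) \<and>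
     (\<forall>x\<in>X. \<forall>y\<in>Y. ((\<lambda>x'. Dyc x' y) has_derivative blinfun_apply (Dyxc x y)) (at x within X)) \<and>
     continuous_on (X \<times> Y) (\<lambda>(x, y). Dxyc x y) \<and>
     continuous_on (X \<times> Y) (\<lambda>(x, y). Dyxc x y) \<and>
     (\<forall>x\<in>X. \<forall>y\<in>Y. \<forall>u v. (Dxyc x y u) \<bullet> v = u \<bullet> (Dyxc x y v)) \<and>
     (\<forall>x\<in>X. inj_on (\<lambda>y. - Dxc x y) Y) \<and>
     (\<forall>y\<in>Y. inj_on (\<lambda>x. - Dyc x y) X) \<and>
     (\<forall>x\<in>X. \<forall>y\<in>Y. bij (blinfun_apply (Dxyc x y))) \<and>
     (\<forall>y\<in>Y. convex ((\<lambda>x. - Dyc x y) ` X)) \<and>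
     (\<forall>x\<in>X. convex ((\<lambda>y. - Dxc x y) ` Y))"

definition cchord ::
  "('a \<Rightarrow> 'b \<Rightarrow> real) \<Rightarrow> 'b set \<Rightarrow> 'a \<Rightarrow> real \<Rightarrow> 'a \<Rightarrow> real \<Rightarrow> 'a \<Rightarrow> real" where
  "cchord c Y x0 u0 x1 u1 x =
     Sup {- c x y + h | y h. y \<in> Y \<and> - c x0 y + h \<le> u0 \<and> - c x1 y + h \<le> u1}"

end

theory Submission
  imports Defs
begin

lemma chord_le:
  assumes "y \<in> Y" "- c x0 y + h \<le> u0" "- c x1 y + h \<le> u1" "z = x0 \<or> z = x1"
  shows "- c z y + h \<le> cchord c Y x0 u0 x1 u1 z"
proof -
  have "bdd_above {- c z y + h | y h. y \<in> Y \<and> - c x0 y + h \<le> u0 \<and> - c x1 y + h \<le> u1}"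
    using assms(4) by (auto intro!: bdd_aboveI[where M="if z = x0 then u0 else u1"])
  note bdd = this
  show ?thesis unfolding cchord_def
    by (rule cSup_upper[OF _ bdd]) (use assms in blast)
qed

lemma chord_ub:
  assumes "Y \<noteq> {}" "z = x0 \<or> z = x1"
  shows "cchord c Y x0 u0 x1 u1 z \<le> (if z = x0 then min u0 (if z = x1 then u1 else u0) else u1)"
proof -
  obtain y where y: "y \<in> Y" using assms by blast
  define h where "h = min (u0 + c x0 y) (u1 + c x1 y)"
  have "- c z y + h \<in> {- c z y + h | y h. y \<in> Y \<and> - c x0 y + h \<le> u0 \<and> - c x1 y + h \<le> u1}"
    using y unfolding h_def by fastforce
  hence ne: "{- c z y + h | y h. y \<in> Y \<and> - c x0 y + h \<le> u0 \<and> - c x1 y + h \<le> u1} \<noteq> {}" by blast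
  show ?thesis unfolding cchord_def
    by (rule cSup_least[OF ne]) (use assms(2) in auto)
qed

theorem lemma3p5:
  fixes X Y :: "'a::euclidean_space set" and c :: "'a \<Rightarrow> 'a \<Rightarrow> real"
    and Dxc Dyc :: "'a \<Rightarrow> 'a \<Rightarrow> 'a" and Dxyc Dyxc :: "'a \<Rightarrow> 'a \<Rightarrow> 'a \<Rightarrow>\<^sub>L 'a"
    and x0 x1 :: 'a and u0 u1 :: real
  assumes "standing_setting X Y c Dxc Dyc Dxyc Dyxc"
    and "x0 \<in> X" and "x1 \<in> X"
  shows "\<forall>x\<in>X. cchord c Y x0 (cchord c Y x0 u0 x1 u1 x0) x1 (cchord c Y x0 u0 x1 u1 x1) x
               = cchord c Y x0 u0 x1 u1 x"
proof
  fix x assume "x \<in> X"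
  have "Y \<noteq> {}" using assms(1) unfolding standing_setting_def by auto
  define v0 where "v0 = cchord c Y x0 u0 x1 u1 x0"
  define v1 where "v1 = cchord c Y x0 u0 x1 u1 x1"
  have a0: "v0 \<le> u0" unfolding v0_def using chord_ub[OF \<open>Y \<noteq> {}\<close>, of x0 x0 x1 c u0 u1] by simp
  have a1: "v1 \<le> u1" unfolding v1_def using chord_ub[OF \<open>Y \<noteq> {}\<close>, of x1 x0 x1 c u0 u1] by (auto split: if_splits)
  have "\<And>y h. y \<in> Y \<Longrightarrow> - c x0 y + h \<le> u0 \<Longrightarrow> - c x1 y + h \<le> u1 \<Longrightarrow>
     - c x0 y + h \<le> v0 \<and> - c x1 y + h \<le> v1"
    unfolding v0_def v1_def using chord_le by metis
  hence "{- c x y + h | y h. y \<in> Y \<and> - c x0 y + h \<le> v0 \<and> - c x1 y + h \<le> v1}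
       = {- c x y + h | y h. y \<in> Y \<and> - c x0 y + h \<le> u0 \<and> - c x1 y + h \<le> u1}"
    using a0 a1 by (smt (verit, best) Collect_cong)
  thus "cchord c Y x0 v0 x1 v1 x = cchord c Y x0 u0 x1 u1 x"
    unfolding cchord_def by simp
qed

end
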